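(* The family $\{\mathcal{T}_t\}_{t\ge0}$ of operators on $C_b(\mathbb{R}^n)$ defined by $\mathcal{T}_th(x)=\exp\{-v_t(x)\}h(\phi(t,x))$, $v_t(x)=\int_0^t\eta(\phi(r,x))dr$, is a $C_0$-semigroup. In addition, for each $t\ge0$ and every $h\in C_b(\mathbb{R}^n)$, $\mathcal{T}_tU_h(x)=U_h(x)$ for all $x\in\mathbb{R}^n$.
   Context: Let $f:\mathbb{R}^n\to\mathbb{R}^n$ be locally Lipschitz, $\dot{\mathbf{x}}=f(\mathbf{x})$ with flow $\phi(t,x)$ defined for all $t\ge0$; $f(x_{\mathrm{eq}})=0$ and $\{x_{\mathrm{eq}}\}$ is asymptotically stable and locally exponentially stable. Let $\eta:\mathbb{R}^n\to\mathbb{R}$ be continuous and positive definite w.r.t. $\{x_{\mathrm{eq}}\}$. Define $V(x)=\int_0^\infty\eta(\phi(t,x))dt\in[0,\infty]$ and, for $h\in C_b(\mathbb{R}^n)$, $U_h(x)=\exp\{-V(x)\}h(\lim_{t\to\infty}\phi(t,x))$ if $V(x)<\infty$, $U_h(x)=0$ otherwise. A $C_0$-semigroup is a family $\{\mathcal{S}_t\}_{t\ge0}$ of bounded linear operators on the function space with $\mathcal{S}_0=\mathrm{id}$, $\mathcal{S}_t\circ\mathcal{S}_s=\mathcal{S}_{t+s}$ for all $t,s\ge0$, and $\lim_{t\downarrow0}\mathcal{S}_th=h$ for all $h$. *)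

theory Defs
  imports "HOL-Analysis.Analysis"
begin

definition is_flow :: "(real^'n \<Rightarrow> real^'n) \<Rightarrow> (real \<Rightarrow> real^'n \<Rightarrow> real^'n) \<Rightarrow> bool" where
  "is_flow f phi \<longleftrightarrow> (\<forall>x. phi 0 x = x \<and>
     (\<forall>t\<ge>0. ((\<lambda>s. phi s x) has_vector_derivative f (phi t x)) (at t within {0..})))"

definition asymp_stable :: "(real \<Rightarrow> real^'n \<Rightarrow> real^'n) \<Rightarrow> real^'n \<Rightarrow> bool" where
  "asymp_stable phi xeq \<longleftrightarrow>
     (\<forall>e>0. \<exists>d>0. \<forall>x. dist x xeq < d \<longrightarrow> (\<forall>t\<ge>0. dist (phi t x) xeq < e)) \<and>
     (\<exists>d>0. \<forall>x. dist x xeq < d \<longrightarrow> ((\<lambda>t. phi t x) \<longlongrightarrow> xeq) at_top)"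

definition loc_exp_stable :: "(real \<Rightarrow> real^'n \<Rightarrow> real^'n) \<Rightarrow> real^'n \<Rightarrow> bool" where
  "loc_exp_stable phi xeq \<longleftrightarrow>
     (\<exists>d>0. \<exists>M>0. \<exists>lam>0. \<forall>x. dist x xeq < d \<longrightarrow>
        (\<forall>t\<ge>0. norm (phi t x - xeq) \<le> M * exp (- lam * t) * norm (x - xeq)))"

definition pos_def :: "(real^'n \<Rightarrow> real) \<Rightarrow> real^'n \<Rightarrow> bool" where
  "pos_def eta xeq \<longleftrightarrow> eta xeq = 0 \<and> (\<forall>x. x \<noteq> xeq \<longrightarrow> eta x > 0)"

definition vt :: "(real \<Rightarrow> real^'n \<Rightarrow> real^'n) \<Rightarrow> (real^'n \<Rightarrow> real) \<Rightarrow> real \<Rightarrow> real^'n \<Rightarrow> real" where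
  "vt phi eta t x = integral {0..t} (\<lambda>r. eta (phi r x))"

definition Tsg :: "(real \<Rightarrow> real^'n \<Rightarrow> real^'n) \<Rightarrow> (real^'n \<Rightarrow> real) \<Rightarrow> real \<Rightarrow> (real^'n \<Rightarrow> real) \<Rightarrow> real^'n \<Rightarrow> real" where
  "Tsg phi eta t h x = exp (- vt phi eta t x) * h (phi t x)"

definition Tb :: "(real \<Rightarrow> real^'n \<Rightarrow> real^'n) \<Rightarrow> (real^'n \<Rightarrow> real) \<Rightarrow> real \<Rightarrow> ((real^'n) \<Rightarrow>\<^sub>C real) \<Rightarrow> ((real^'n) \<Rightarrow>\<^sub>C real)" where
  "Tb phi eta t h = Bcontfun (Tsg phi eta t (apply_bcontfun h))"

definition Vfun :: "(real \<Rightarrow> real^'n \<Rightarrow> real^'n) \<Rightarrow> (real^'n \<Rightarrow> real) \<Rightarrow> real^'n \<Rightarrow> ennreal" where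
  "Vfun phi eta x = (\<integral>\<^sup>+ t. indicator {0..} t * ennreal (eta (phi t x)) \<partial>lborel)"

definition Ufun :: "(real \<Rightarrow> real^'n \<Rightarrow> real^'n) \<Rightarrow> (real^'n \<Rightarrow> real) \<Rightarrow> (real^'n \<Rightarrow> real) \<Rightarrow> real^'n \<Rightarrow> real" where
  "Ufun phi eta h x = (if Vfun phi eta x < \<infinity>
      then exp (- enn2real (Vfun phi eta x)) * h (Lim at_top (\<lambda>t. phi t x)) else 0)"

end

theory Submission
  imports Defs
begin


definition sol :: "('a::real_normed_vector \<Rightarrow> 'a) \<Rightarrow> (real \<Rightarrow> 'a) \<Rightarrow> real \<Rightarrow> real \<Rightarrow> bool" where
  "sol f y a b \<longleftrightarrow> (\<forall>s\<in>{a..b}. (y has_vector_derivative f (y s)) (at s within {a..b}))"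

lemma sol_sub: "sol f y a b \<Longrightarrow> a \<le> c \<Longrightarrow> d \<le> b \<Longrightarrow> sol f y c d"
  unfolding sol_def
proof
  fix s assume "\<forall>s\<in>{a..b}. (y has_vector_derivative f (y s)) (at s within {a..b})" "a \<le> c" "d \<le> b" "s \<in> {c..d}"
  moreover have "{c..d} \<subseteq> {a..b}" using \<open>a \<le> c\<close> \<open>d \<le> b\<close> by auto
  ultimately show "(y has_vector_derivative f (y s)) (at s within {c..d})"
    using has_vector_derivative_within_subset by blast
qed

lemma sol_cont: "sol f y a b \<Longrightarrow> continuous_on {a..b} y"
  unfolding sol_def continuous_on_eq_continuous_within
  using has_vector_derivative_continuous by blast

lemma mvt_bound:
  fixes g :: "real \<Rightarrow> 'a::real_normed_vector"
  assumes "\<And>u. u \<in> {a..s} \<Longrightarrow> (g has_vector_derivative g' u) (at u within {a..s})"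
    and "\<And>u. u \<in> {a..s} \<Longrightarrow> norm (g' u) \<le> B" and "a \<le> s"
  shows "norm (g s - g a) \<le> B * (s - a)"
proof -
  have "norm (g s - g a) \<le> B * norm (s - a)"
  proof (rule differentiable_bound[of "{a..s}" g "\<lambda>u h. h *\<^sub>R g' u" B])
    fix u assume u: "u \<in> {a..s}"
    show "(g has_derivative (\<lambda>h. h *\<^sub>R g' u)) (at u within {a..s})"
      using assms(1)[OF u] by (simp add: has_vector_derivative_def)
    have "onorm (\<lambda>h. h *\<^sub>R g' u) = onorm (\<lambda>h::real. h) * norm (g' u)"
      by (rule onorm_scaleR_left) (rule bounded_linear_ident)
    also have "\<dots> = norm (g' u)" by (simp add: onorm_id_le onorm_id)
    finally show "onorm (\<lambda>h. h *\<^sub>R g' u) \<le> B" using assms(2)[OF u] by simp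
  qed (use assms(3) in auto)
  then show ?thesis using assms by simp
qed

lemma C0:
  fixes y z :: "real \<Rightarrow> 'a::real_normed_vector"
  assumes sy: "sol f y a b" and sz: "sol f z a b" and L: "L-lipschitz_on K f"
    and yK: "\<And>u. u \<in> {a..b} \<Longrightarrow> y u \<in> K" and zK: "\<And>u. u \<in> {a..b} \<Longrightarrow> z u \<in> K"
    and ab: "a \<le> b" and small: "(b - a) * L \<le> 1/2"
  shows "\<forall>s\<in>{a..b}. norm (y s - z s) \<le> 2 * norm (y a - z a)"
proof -
  have L0: "0 \<le> L" using L by (simp add: lipschitz_on_def)
  have c: "continuous_on {a..b} (\<lambda>u. norm (y u - z u))"
    using sol_cont[OF sy] sol_cont[OF sz] by (intro continuous_intros)
  obtain m where m: "m \<in> {a..b}" "\<And>u. u \<in> {a..b} \<Longrightarrow> norm (y u - z u) \<le> norm (y m - z m)"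
    using continuous_attains_sup[OF compact_Icc _ c] ab by auto
  define M where "M = norm (y m - z m)"
  have key: "norm (y s - z s) \<le> norm (y a - z a) + M / 2" if s: "s \<in> {a..b}" for s
  proof -
    have "norm ((y s - z s) - (y a - z a)) \<le> (L * M) * (s - a)"
    proof (rule mvt_bound[where g' = "\<lambda>u. f (y u) - f (z u)"])
      fix u assume u: "u \<in> {a..s}"
      then have ub: "u \<in> {a..b}" using s by auto
      have sub: "{a..s} \<subseteq> {a..b}" using s by auto
      show "((\<lambda>u. y u - z u) has_vector_derivative f (y u) - f (z u)) (at u within {a..s})"
      proof (intro has_vector_derivative_diff)
        show "(y has_vector_derivative f (y u)) (at u within {a..s})"
          using has_vector_derivative_within_subset[OF bspec[OF sy[unfolded sol_def] ub] sub] .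
        show "(z has_vector_derivative f (z u)) (at u within {a..s})"
          using has_vector_derivative_within_subset[OF bspec[OF sz[unfolded sol_def] ub] sub] .
      qed
      have "norm (f (y u) - f (z u)) \<le> L * norm (y u - z u)"
        using lipschitz_onD[OF L yK[OF ub] zK[OF ub]] by (simp add: dist_norm)
      also have "\<dots> \<le> L * M" using m(2)[OF ub] L0 unfolding M_def by (simp add: mult_left_mono)
      finally show "norm (f (y u) - f (z u)) \<le> L * M" .
    qed (use s in auto)
    moreover have "(L * M) * (s - a) \<le> M / 2"
    proof -
      have "(L * M) * (s - a) = M * ((s - a) * L)" by simp
      also have "\<dots> \<le> M * (1/2)"
      proof (intro mult_left_mono)
        have "(s - a) * L \<le> (b - a) * L" using s L0 by (intro mult_right_mono) auto
        then show "(s - a) * L \<le> 1/2" using small by linarith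
      qed (simp add: M_def)
      finally show ?thesis by simp
    qed
    ultimately show ?thesis using norm_triangle_ineq2[of "y s - z s" "y a - z a"] by simp
  qed
  have "M \<le> 2 * norm (y a - z a)" using key[OF m(1)] unfolding M_def by simp
  then show ?thesis using m(2) unfolding M_def by (meson order_trans)
qed



lemma exit_lemma:
  fixes w :: "real \<Rightarrow> real"
  assumes c: "continuous_on {a..b} w" and ab: "a \<le> b" and wa: "w a < r"
    and step: "\<And>s. s \<in> {a..b} \<Longrightarrow> (\<forall>u\<in>{a..s}. w u \<le> r) \<Longrightarrow> w s < r"
  shows "\<forall>s\<in>{a..b}. w s < r"
proof (rule ccontr)
  assume na: "\<not> ?thesis"
  define E where "E = {a..b} \<inter> w -` {r..}"
  have En: "E \<noteq> {}" using na unfolding E_def by force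
  have Ec: "closed E" unfolding E_def by (rule continuous_closed_preimage[OF c]) auto
  have Eb: "bdd_below E" unfolding E_def by (rule bdd_belowI[of _ a]) auto
  define m where "m = Inf E"
  have mE: "m \<in> E" unfolding m_def by (rule closed_contains_Inf[OF En Eb Ec])
  have below: "w u < r" if "u \<in> {a..b}" "u < m" for u
  proof (rule ccontr)
    assume "\<not> w u < r"
    then have "u \<in> E" using that unfolding E_def by auto
    then have "m \<le> u" unfolding m_def by (rule cInf_lower[OF _ Eb])
    then show False using that by simp
  qed
  have mab: "m \<in> {a..b}" using mE unfolding E_def by auto
  have wm: "w m \<le> r"
  proof (cases "m = a")
    case True then show ?thesis using wa by simp
  next
    case False
    then have am: "a < m" using mab by auto
    define G where "G = {a..b} \<inter> w -` {..r}"
    have Gc: "closed G" unfolding G_def by (rule continuous_closed_preimage[OF c]) auto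
    have "{a..<m} \<subseteq> G" unfolding G_def using below mab by (auto simp: less_imp_le)
    then have "closure {a..<m} \<subseteq> G" using Gc by (rule closure_minimal)
    then have "m \<in> G" using am by auto
    then show ?thesis unfolding G_def by auto
  qed
  have "\<forall>u\<in>{a..m}. w u \<le> r"
  proof
    fix u assume "u \<in> {a..m}"
    then show "w u \<le> r" using below[of u] wm mab by (cases "u = m") auto
  qed
  then have "w m < r" using step mab by blast
  then show False using mE unfolding E_def by auto
qed

lemma C1:
  fixes y z :: "real \<Rightarrow> 'a::real_normed_vector"
  assumes sy: "sol f y a b" and sz: "sol f z a b" and L: "L-lipschitz_on K f"
    and zK0: "\<And>u. u \<in> {a..b} \<Longrightarrow> z u \<in> K0" and nb: "\<And>q. q \<in> K0 \<Longrightarrow> cball q r \<subseteq> K"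
    and ab: "a \<le> b" and small: "(b - a) * L \<le> 1/2" and close: "2 * norm (y a - z a) < r"
  shows "\<forall>s\<in>{a..b}. norm (y s - z s) \<le> 2 * norm (y a - z a)"
proof -
  have L0: "0 \<le> L" using L by (simp add: lipschitz_on_def)
  have inK: "y u \<in> K" if "u \<in> {a..b}" "norm (y u - z u) \<le> r" for u
  proof -
    have "y u \<in> cball (z u) r" using that by (simp add: dist_norm norm_minus_commute)
    then show ?thesis using nb[OF zK0[OF that(1)]] by auto
  qed
  have zK: "z u \<in> K" if "u \<in> {a..b}" for u
  proof -
    have "0 \<le> r" using close norm_ge_zero[of "y a - z a"] by linarith
    then show ?thesis using nb[OF zK0[OF that]] centre_in_cball[of "z u" r] by blast
  qed
  have c: "continuous_on {a..b} (\<lambda>u. norm (y u - z u))"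
    using sol_cont[OF sy] sol_cont[OF sz] by (intro continuous_intros)
  have all: "\<forall>s\<in>{a..b}. norm (y s - z s) < r"
  proof (rule exit_lemma[OF c ab])
    show "norm (y a - z a) < r" using close norm_ge_zero[of "y a - z a"] by linarith
  next
    fix s assume s: "s \<in> {a..b}" and le: "\<forall>u\<in>{a..s}. norm (y u - z u) \<le> r"
    have "\<forall>s'\<in>{a..s}. norm (y s' - z s') \<le> 2 * norm (y a - z a)"
    proof (rule C0[OF sol_sub[OF sy] sol_sub[OF sz] L])
      show "(s - a) * L \<le> 1/2"
        using small s L0 by (smt (verit) atLeastAtMost_iff mult_right_mono)
    qed (use s le inK zK in auto)
    then have "norm (y s - z s) \<le> 2 * norm (y a - z a)" using s by auto
    then show "norm (y s - z s) < r" using close by linarith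
  qed
  show ?thesis
    by (rule C0[OF sy sz L _ _ ab small]) (use all inK zK in \<open>auto simp: less_imp_le\<close>)
qed



lemma D:
  fixes f :: "'a::real_normed_vector \<Rightarrow> 'a"
  assumes L: "L-lipschitz_on K f" and nb: "\<And>q. q \<in> K0 \<Longrightarrow> cball q r \<subseteq> K"
    and dpos: "0 < \<delta>" and dsmall: "\<delta> * L \<le> 1/2"
  shows "\<forall>a b y z. a \<le> b \<longrightarrow> b - a \<le> real N * \<delta> \<longrightarrow> sol f y a b \<longrightarrow> sol f z a b \<longrightarrow>
     (\<forall>u\<in>{a..b}. z u \<in> K0) \<longrightarrow> 2 ^ N * norm (y a - z a) < r \<longrightarrow>
     norm (y b - z b) \<le> 2 ^ N * norm (y a - z a)"
proof (induction N)
  case 0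
  then show ?case by auto
next
  case (Suc N)
  have L0: "0 \<le> L" using L by (simp add: lipschitz_on_def)
  show ?case
  proof (intro allI impI)
    fix a b y z
    assume ab: "a \<le> b" and len: "b - a \<le> real (Suc N) * \<delta>" and sy: "sol f y a b" and sz: "sol f z a b"
      and zK0: "\<forall>u\<in>{a..b}. z u \<in> K0" and cl: "2 ^ Suc N * norm (y a - z a) < r"
    have n0: "0 \<le> norm (y a - z a)" by simp
    have one: "1 \<le> (2::real) ^ N" by simp
    have cl2: "2 * norm (y a - z a) < r"
    proof -
      have "2 * norm (y a - z a) \<le> 2 ^ Suc N * norm (y a - z a)"
        using one n0 by (simp add: mult_right_mono)
      then show ?thesis using cl by linarith
    qed
    show "norm (y b - z b) \<le> 2 ^ Suc N * norm (y a - z a)"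
    proof (cases "b - a \<le> \<delta>")
      case True
      have "(b - a) * L \<le> 1/2" using True L0 dsmall
        by (smt (verit) mult_right_mono)
      note sm = this
      have "\<forall>s\<in>{a..b}. norm (y s - z s) \<le> 2 * norm (y a - z a)"
        by (rule C1[OF sy sz L _ nb ab sm cl2]) (use zK0 in auto)
      then have "norm (y b - z b) \<le> 2 * norm (y a - z a)" using ab by auto
      also have "\<dots> \<le> 2 ^ Suc N * norm (y a - z a)" using one n0 by (simp add: mult_right_mono)
      finally show ?thesis .
    next
      case False
      define c where "c = a + \<delta>"
      have ac: "a \<le> c" "c \<le> b" using False dpos unfolding c_def by auto
      have sm: "(c - a) * L \<le> 1/2" using dsmall unfolding c_def by simp
      have "\<forall>s\<in>{a..c}. norm (y s - z s) \<le> 2 * norm (y a - z a)"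
        by (rule C1[OF sol_sub[OF sy] sol_sub[OF sz] L _ nb ac(1) sm cl2]) (use zK0 ac in auto)
      then have yc: "norm (y c - z c) \<le> 2 * norm (y a - z a)" using ac by auto
      have "2 ^ N * norm (y c - z c) \<le> 2 ^ N * (2 * norm (y a - z a))"
        using yc by (simp add: mult_left_mono)
      also have "\<dots> = 2 ^ Suc N * norm (y a - z a)" by simp
      finally have yc2: "2 ^ N * norm (y c - z c) \<le> 2 ^ Suc N * norm (y a - z a)" .
      have "norm (y b - z b) \<le> 2 ^ N * norm (y c - z c)"
      proof (rule Suc.IH[rule_format])
        show "b - c \<le> real N * \<delta>" using len unfolding c_def by (simp add: algebra_simps)
        show "2 ^ N * norm (y c - z c) < r" using yc2 cl by linarith
      qed (use ac sol_sub[OF sy] sol_sub[OF sz] zK0 in auto)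
      also have "\<dots> \<le> 2 ^ Suc N * norm (y a - z a)" using yc2 .
      finally show ?thesis .
    qed
  qed
qed



lemma sol_phi:
  assumes fl: "is_flow f phi" and a: "0 \<le> a"
  shows "sol f (\<lambda>s. phi s x) a b"
  unfolding sol_def
proof
  fix s assume s: "s \<in> {a..b}"
  have "((\<lambda>s. phi s x) has_vector_derivative f (phi s x)) (at s within {0..})"
    using fl s a unfolding is_flow_def by auto
  moreover have "{a..b} \<subseteq> {0..}" using a by auto
  ultimately show "((\<lambda>s. phi s x) has_vector_derivative f (phi s x)) (at s within {a..b})"
    using has_vector_derivative_within_subset by blast
qed

lemma sol_phi_shift:
  assumes fl: "is_flow f phi" and s0: "0 \<le> s"
  shows "sol f (\<lambda>u. phi (u - s) p) s b"
  unfolding sol_def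
proof
  fix u assume u: "u \<in> {s..b}"
  have d1: "((\<lambda>u. u - s) has_vector_derivative 1) (at u within {s..b})"
    using has_vector_derivative_diff[OF has_vector_derivative_id has_vector_derivative_const[of s]] by simp
  have "((\<lambda>v. phi v p) has_vector_derivative f (phi (u - s) p)) (at (u - s) within {0..})"
    using fl u unfolding is_flow_def by auto
  note d0 = this
  have sub: "(\<lambda>u. u - s) ` {s..b} \<subseteq> {0..}" by auto
  have d2: "((\<lambda>v. phi v p) has_vector_derivative f (phi (u - s) p)) (at (u - s) within (\<lambda>u. u - s) ` {s..b})"
    by (rule has_vector_derivative_within_subset[OF d0 sub])
  show "((\<lambda>u. phi (u - s) p) has_vector_derivative f (phi (u - s) p)) (at u within {s..b})"
    using vector_diff_chain_within[OF d1 d2] by (simp add: o_def)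
qed

lemma nbhd_compact:
  fixes K0 :: "'a::euclidean_space set"
  assumes "compact K0" "0 < r"
  shows "\<exists>K. compact K \<and> (\<forall>q\<in>K0. cball q r \<subseteq> K)"
proof (intro exI conjI)
  show "compact {x + y | x y. x \<in> K0 \<and> y \<in> cball 0 r}"
    by (rule compact_sums[OF assms(1) compact_cball])
  show "\<forall>q\<in>K0. cball q r \<subseteq> {x + y | x y. x \<in> K0 \<and> y \<in> cball 0 r}"
  proof (intro ballI subsetI)
    fix q p assume q: "q \<in> K0" and p: "p \<in> cball q r"
    have "p = q + (p - q)" by simp
    moreover have "p - q \<in> cball 0 r" using p by (simp add: dist_norm norm_minus_commute)
    ultimately show "p \<in> {x + y | x y. x \<in> K0 \<and> y \<in> cball 0 r}" using q by blast
  qed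
qed

lemma lip_compact:
  assumes ll: "local_lipschitz (UNIV::real set) UNIV (\<lambda>_. f)" and K: "compact K"
  shows "\<exists>L. L-lipschitz_on K f"
proof -
  have "continuous_on UNIV f"
    using local_lipschitz_continuous_on[OF ll, of 0] by simp
  then obtain L where "\<And>t. t \<in> {0::real} \<Longrightarrow> L-lipschitz_on K f"
    using local_lipschitz_compact_implies_lipschitz[OF local_lipschitz_subset[OF ll] K compact_sing[of "0::real"]]
    by auto
  then show ?thesis by blast
qed



lemma cont_dep:
  fixes f :: "real^'n \<Rightarrow> real^'n"
  assumes ll: "local_lipschitz (UNIV::real set) UNIV (\<lambda>_. f)" and fl: "is_flow f phi" and t: "0 \<le> t"
  shows "\<exists>C d K. 0 < d \<and> compact K \<and> (\<forall>r\<in>{0..t}. phi r x0 \<in> K) \<and>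
     (\<forall>x. dist x x0 < d \<longrightarrow> (\<forall>r\<in>{0..t}. norm (phi r x - phi r x0) \<le> C * norm (x - x0) \<and> phi r x \<in> K))"
proof -
  define K0 where "K0 = (\<lambda>s. phi s x0) ` {0..t}"
  have cK0: "compact K0" unfolding K0_def
    by (rule compact_continuous_image[OF sol_cont[OF sol_phi[OF fl order_refl]] compact_Icc])
  obtain K where cK: "compact K" and nb: "\<And>q. q \<in> K0 \<Longrightarrow> cball q 1 \<subseteq> K"
    using nbhd_compact[OF cK0, of 1] by auto
  obtain L where L: "L-lipschitz_on K f" using lip_compact[OF ll cK] by auto
  have L0: "0 \<le> L" using L by (simp add: lipschitz_on_def)
  define \<delta> where "\<delta> = 1 / (2 * (L + 1))"
  have dpos: "0 < \<delta>" unfolding \<delta>_def using L0 by simp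
  have dsmall: "\<delta> * L \<le> 1/2" unfolding \<delta>_def using L0 by (simp add: field_simps)
  define N where "N = nat \<lceil>t / \<delta>\<rceil>"
  have tN: "t \<le> real N * \<delta>"
  proof -
    have "t / \<delta> \<le> real N" unfolding N_def by linarith
    then show ?thesis using dpos by (simp add: field_simps)
  qed
  note Dl = D[OF L nb dpos dsmall, where N=N]
  show ?thesis
  proof (intro exI conjI allI impI ballI)
    show "0 < 1 / (2::real) ^ (N + 1)" by simp
    show "compact K" by (rule cK)
  next
    fix r assume r: "r \<in> {0..t}"
    show "phi r x0 \<in> K" using nb[of "phi r x0"] r unfolding K0_def by auto
  next
    fix x r assume x: "dist x x0 < 1 / (2::real) ^ (N + 1)" and r: "r \<in> {0..t}"
    have cl: "2 ^ N * norm (phi 0 x - phi 0 x0) < 1 / 2"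
    proof -
      have "phi 0 x = x" "phi 0 x0 = x0" using fl unfolding is_flow_def by auto
      moreover have "norm (x - x0) < 1 / 2 ^ (N + 1)" using x by (simp add: dist_norm)
      then have "2 ^ N * norm (x - x0) < 2 ^ N * (1 / 2 ^ (N + 1))"
        by (intro mult_strict_left_mono) auto
      ultimately show ?thesis by simp
    qed
    have bd: "norm (phi r x - phi r x0) \<le> 2 ^ N * norm (phi 0 x - phi 0 x0)"
    proof (rule Dl[rule_format])
      show "r - 0 \<le> real N * \<delta>" using r tN by auto
      show "2 ^ N * norm (phi 0 x - phi 0 x0) < 1" using cl by simp
      show "phi u x0 \<in> K0" if "u \<in> {0..r}" for u using r that unfolding K0_def by auto
    qed (use r sol_phi[OF fl order_refl] in auto)
    have p0: "phi 0 x = x" "phi 0 x0 = x0" using fl unfolding is_flow_def by auto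
    show "norm (phi r x - phi r x0) \<le> 2 ^ N * norm (x - x0)" using bd p0 by simp
    have "norm (phi r x - phi r x0) \<le> 1" using bd cl by simp
    then have "phi r x \<in> cball (phi r x0) 1" by (simp add: dist_norm norm_minus_commute)
    then show "phi r x \<in> K" using nb[of "phi r x0"] r unfolding K0_def by auto
  qed
qed

lemma flow_prop:
  fixes f :: "real^'n \<Rightarrow> real^'n"
  assumes ll: "local_lipschitz (UNIV::real set) UNIV (\<lambda>_. f)" and fl: "is_flow f phi"
    and s: "0 \<le> s" and t: "0 \<le> t"
  shows "phi t (phi s x) = phi (t + s) x"
proof -
  define K0 where "K0 = (\<lambda>u. phi u x) ` {s..s+t}"
  have cK0: "compact K0" unfolding K0_def
    by (rule compact_continuous_image[OF sol_cont[OF sol_phi[OF fl s]] compact_Icc])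
  obtain K where cK: "compact K" and nb: "\<And>q. q \<in> K0 \<Longrightarrow> cball q 1 \<subseteq> K"
    using nbhd_compact[OF cK0, of 1] by auto
  obtain L where L: "L-lipschitz_on K f" using lip_compact[OF ll cK] by auto
  have L0: "0 \<le> L" using L by (simp add: lipschitz_on_def)
  define \<delta> where "\<delta> = 1 / (2 * (L + 1))"
  have dpos: "0 < \<delta>" unfolding \<delta>_def using L0 by simp
  have dsmall: "\<delta> * L \<le> 1/2" unfolding \<delta>_def using L0 by (simp add: field_simps)
  define N where "N = nat \<lceil>t / \<delta>\<rceil>"
  have tN: "t \<le> real N * \<delta>"
  proof -
    have "t / \<delta> \<le> real N" unfolding N_def by linarith
    then show ?thesis using dpos by (simp add: field_simps)
  qed
  have p0: "phi 0 (phi s x) = phi s x" using fl unfolding is_flow_def by auto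
  have "norm (phi (s + t - s) (phi s x) - phi (s + t) x) \<le> 2 ^ N * norm (phi (s - s) (phi s x) - phi s x)"
  proof (rule D[OF L nb dpos dsmall, where N=N, rule_format, where y = "\<lambda>u. phi (u - s) (phi s x)" and z = "\<lambda>u. phi u x"])
    show "s + t - s \<le> real N * \<delta>" using tN by simp
    show "2 ^ N * norm (phi (s - s) (phi s x) - phi s x) < 1" using p0 by simp
    show "phi u x \<in> K0" if "u \<in> {s..s + t}" for u using that unfolding K0_def by auto
  qed (use t sol_phi_shift[OF fl s] sol_phi[OF fl s] in auto)
  then show ?thesis using p0 by (simp add: add.commute)
qed



lemma eta_nonneg: "pos_def eta xeq \<Longrightarrow> 0 \<le> eta x"
  unfolding pos_def_def by (cases "x = xeq") (auto intro: less_imp_le)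

lemma phi_cont_time:
  assumes fl: "is_flow f phi"
  shows "continuous_on {0..} (\<lambda>s. phi s x)"
  unfolding continuous_on_eq_continuous_within
proof
  fix s :: real assume "s \<in> {0..}"
  then have "((\<lambda>s. phi s x) has_vector_derivative f (phi s x)) (at s within {0..})"
    using fl unfolding is_flow_def by auto
  then show "continuous (at s within {0..}) (\<lambda>s. phi s x)"
    by (rule has_vector_derivative_continuous)
qed

lemma eta_traj_cont:
  assumes fl: "is_flow f phi" and ce: "continuous_on UNIV eta" and that: "0 \<le> a"
  shows "continuous_on {a..b} (\<lambda>r. eta (phi r x))"
proof -
  have "continuous_on {a..b} (\<lambda>r. phi r x)"
    by (rule continuous_on_subset[OF phi_cont_time[OF fl]]) (use that in auto)
  then show ?thesis using continuous_on_compose2[OF ce, of "{a..b}" "\<lambda>r. phi r x"] by auto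
qed

lemma vt_nonneg:
  assumes fl: "is_flow f phi" and ce: "continuous_on UNIV eta" and pd: "pos_def eta xeq"
  shows "0 \<le> vt phi eta t x"
  unfolding vt_def
  by (rule Henstock_Kurzweil_Integration.integral_nonneg[OF integrable_continuous_interval[OF eta_traj_cont[OF fl ce order_refl]]])
    (rule eta_nonneg[OF pd])

lemma phi_space_cont:
  fixes f :: "real^'n \<Rightarrow> real^'n"
  assumes ll: "local_lipschitz (UNIV::real set) UNIV (\<lambda>_. f)" and fl: "is_flow f phi" and t: "0 \<le> t"
  shows "continuous_on UNIV (phi t)"
  unfolding continuous_on_iff
proof (intro ballI allI impI)
  fix x0 :: "real^'n" and e :: real assume e: "0 < e"
  obtain C d K where d: "0 < d" and
    H: "\<And>x r. dist x x0 < d \<Longrightarrow> r \<in> {0..t} \<Longrightarrow> norm (phi r x - phi r x0) \<le> C * norm (x - x0)"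
    using cont_dep[OF ll fl t, of x0] by blast
  show "\<exists>d>0. \<forall>x'\<in>UNIV. dist x' x0 < d \<longrightarrow> dist (phi t x') (phi t x0) < e"
  proof (intro exI[of _ "min d (e / (\<bar>C\<bar> + 1))"] conjI ballI impI)
    show "0 < min d (e / (\<bar>C\<bar> + 1))" using d e by simp
    fix x assume x: "dist x x0 < min d (e / (\<bar>C\<bar> + 1))"
    have "dist (phi t x) (phi t x0) \<le> C * norm (x - x0)"
      using H[of x t] x t by (simp add: dist_norm)
    also have "\<dots> \<le> \<bar>C\<bar> * norm (x - x0)" by (simp add: mult_right_mono)
    also have "\<dots> \<le> \<bar>C\<bar> * (e / (\<bar>C\<bar> + 1))" using x by (intro mult_left_mono) (auto simp: dist_norm)
    also have "\<dots> < e" using e by (simp add: field_simps)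
    finally show "dist (phi t x) (phi t x0) < e" .
  qed
qed



lemma vt_cont:
  fixes f :: "real^'n \<Rightarrow> real^'n"
  assumes ll: "local_lipschitz (UNIV::real set) UNIV (\<lambda>_. f)" and fl: "is_flow f phi" and t: "0 \<le> t"
    and ce: "continuous_on UNIV eta"
  shows "continuous_on UNIV (vt phi eta t)"
  unfolding continuous_on_iff
proof (intro ballI allI impI)
  fix x0 :: "real^'n" and e :: real assume e: "0 < e"
  obtain C d K where d: "0 < d" and cK: "compact K" and K0: "\<And>r. r \<in> {0..t} \<Longrightarrow> phi r x0 \<in> K" and
    H: "\<And>x r. dist x x0 < d \<Longrightarrow> r \<in> {0..t} \<Longrightarrow> norm (phi r x - phi r x0) \<le> C * norm (x - x0) \<and> phi r x \<in> K"
    using cont_dep[OF ll fl t, of x0] by blast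
  have uc: "uniformly_continuous_on K eta"
    by (rule compact_uniformly_continuous[OF continuous_on_subset[OF ce] cK]) auto
  define e' where "e' = e / (t + 1)"
  have e': "0 < e'" using e t unfolding e'_def by simp
  obtain \<rho> where rho: "0 < \<rho>" and R: "\<And>p q. p \<in> K \<Longrightarrow> q \<in> K \<Longrightarrow> dist p q < \<rho> \<Longrightarrow> dist (eta p) (eta q) < e'"
    using uc e' unfolding uniformly_continuous_on_def by metis
  show "\<exists>d>0. \<forall>x'\<in>UNIV. dist x' x0 < d \<longrightarrow> dist (vt phi eta t x') (vt phi eta t x0) < e"
  proof (intro exI[of _ "min d (\<rho> / (\<bar>C\<bar> + 1))"] conjI ballI impI)
    show "0 < min d (\<rho> / (\<bar>C\<bar> + 1))" using d rho by simp
    fix x assume x: "dist x x0 < min d (\<rho> / (\<bar>C\<bar> + 1))"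
    have pt: "\<bar>eta (phi r x) - eta (phi r x0)\<bar> \<le> e'" if r: "r \<in> {0..t}" for r
    proof -
      have "norm (phi r x - phi r x0) \<le> C * norm (x - x0)" "phi r x \<in> K" using H[of x r] x r by auto
      have "C * norm (x - x0) \<le> \<bar>C\<bar> * norm (x - x0)" by (simp add: mult_right_mono)
      also have "\<dots> \<le> \<bar>C\<bar> * (\<rho> / (\<bar>C\<bar> + 1))" using x by (intro mult_left_mono) (auto simp: dist_norm)
      also have "\<dots> < \<rho>" using rho by (simp add: field_simps)
      finally have "dist (phi r x) (phi r x0) < \<rho>"
        using \<open>norm (phi r x - phi r x0) \<le> C * norm (x - x0)\<close> by (simp add: dist_norm)
      then have "dist (eta (phi r x)) (eta (phi r x0)) < e'" using R \<open>phi r x \<in> K\<close> K0[OF r] by blast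
      then show ?thesis by (simp add: dist_real_def)
    qed
    have i1: "(\<lambda>r. eta (phi r x)) integrable_on {0..t}"
      by (rule integrable_continuous_interval[OF eta_traj_cont[OF fl ce order_refl]])
    have i2: "(\<lambda>r. eta (phi r x0)) integrable_on {0..t}"
      by (rule integrable_continuous_interval[OF eta_traj_cont[OF fl ce order_refl]])
    have i3: "(\<lambda>r. eta (phi r x) - eta (phi r x0)) integrable_on {0..t}"
      using i1 i2 by (rule integrable_diff)
    have diff: "vt phi eta t x - vt phi eta t x0 = integral {0..t} (\<lambda>r. eta (phi r x) - eta (phi r x0))"
      unfolding vt_def using integral_diff[OF i1 i2] by simp
    have up: "integral {0..t} (\<lambda>r. eta (phi r x) - eta (phi r x0)) \<le> integral {0..t} (\<lambda>r. e')"
      by (rule integral_le[OF i3]) (use pt in \<open>force simp: abs_le_iff\<close>)+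
    have lo: "integral {0..t} (\<lambda>r. - e') \<le> integral {0..t} (\<lambda>r. eta (phi r x) - eta (phi r x0))"
      by (rule integral_le[OF _ i3]) (use pt in \<open>force simp: abs_le_iff\<close>)+
    have ic: "integral {0..t} (\<lambda>r. e') = t * e'" "integral {0..t} (\<lambda>r. - e') = - (t * e')" using t by auto
    have "t * e' < e" using e t unfolding e'_def by (simp add: field_simps)
    then show "dist (vt phi eta t x) (vt phi eta t x0) < e"
      using up lo ic diff t by (simp add: dist_real_def abs_less_iff)
  qed
qed

lemma Tsg_bcontfun:
  fixes f :: "real^'n \<Rightarrow> real^'n"
  assumes ll: "local_lipschitz (UNIV::real set) UNIV (\<lambda>_. f)" and fl: "is_flow f phi" and t: "0 \<le> t"
    and ce: "continuous_on UNIV eta" and pd: "pos_def eta xeq" and h: "h \<in> bcontfun"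
  shows "Tsg phi eta t h \<in> bcontfun"
proof -
  have hc: "continuous_on UNIV h" and hb: "bounded (range h)" using h unfolding bcontfun_def by auto
  obtain B where B: "\<And>x. norm (h x) \<le> B" using hb unfolding bounded_iff by auto
  have c1: "continuous_on UNIV (\<lambda>x. h (phi t x))"
    using continuous_on_compose2[OF hc phi_space_cont[OF ll fl t]] by auto
  have c: "continuous_on UNIV (Tsg phi eta t h)"
    unfolding Tsg_def[abs_def]
    by (intro continuous_intros c1 vt_cont[OF ll fl t ce])
  have "norm (Tsg phi eta t h x) \<le> B" for x
  proof -
    have "exp (- vt phi eta t x) \<le> 1" using vt_nonneg[OF fl ce pd] by simp
    then have "norm (Tsg phi eta t h x) \<le> 1 * norm (h (phi t x))"
      unfolding Tsg_def using mult_right_mono[of "exp (- vt phi eta t x)" 1 "\<bar>h (phi t x)\<bar>"] by (simp add: abs_mult)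
    then show ?thesis using B[of "phi t x"] by simp
  qed
  then have "bounded (range (Tsg phi eta t h))" unfolding bounded_iff by auto
  then show ?thesis using c unfolding bcontfun_def by auto
qed



lemma vt_add:
  fixes f :: "real^'n \<Rightarrow> real^'n"
  assumes ll: "local_lipschitz (UNIV::real set) UNIV (\<lambda>_. f)" and fl: "is_flow f phi"
    and ce: "continuous_on UNIV eta" and s: "0 \<le> s" and t: "0 \<le> t"
  shows "vt phi eta t x + vt phi eta s (phi t x) = vt phi eta (s + t) x"
proof -
  have "vt phi eta s (phi t x) = integral {0..s} ((\<lambda>r. eta (phi r x)) \<circ> (\<lambda>r. r + t))"
    unfolding vt_def by (rule integral_cong) (use flow_prop[OF ll fl t] in auto)
  also have "\<dots> = integral {0 + t..s + t} (\<lambda>r. eta (phi r x))"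
    by (rule integral_shift[OF eta_traj_cont[OF fl ce]]) (use t in simp)
  finally have "vt phi eta s (phi t x) = integral {t..s + t} (\<lambda>r. eta (phi r x))" by simp
  moreover have "integral {0..t} (\<lambda>r. eta (phi r x)) + integral {t..s + t} (\<lambda>r. eta (phi r x))
      = integral {0..s + t} (\<lambda>r. eta (phi r x))"
    by (rule Henstock_Kurzweil_Integration.integral_combine[OF _ _ integrable_continuous_interval[OF eta_traj_cont[OF fl ce order_refl]]]) (use s t in auto)
  ultimately show ?thesis unfolding vt_def by simp
qed

lemma Tb_apply:
  fixes f :: "real^'n \<Rightarrow> real^'n"
  assumes ll: "local_lipschitz (UNIV::real set) UNIV (\<lambda>_. f)" and fl: "is_flow f phi" and t: "0 \<le> t"
    and ce: "continuous_on UNIV eta" and pd: "pos_def eta xeq"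
  shows "apply_bcontfun (Tb phi eta t h) = Tsg phi eta t (apply_bcontfun h)"
  unfolding Tb_def
  by (rule Bcontfun_inverse[OF Tsg_bcontfun[OF ll fl t ce pd apply_bcontfun]])

lemma Tsg_zero:
  assumes fl: "is_flow f phi"
  shows "Tsg phi eta 0 h = h"
proof
  fix x
  have "phi 0 x = x" using fl unfolding is_flow_def by auto
  then show "Tsg phi eta 0 h x = h x" unfolding Tsg_def vt_def by simp
qed

lemma Tsg_comp:
  fixes f :: "real^'n \<Rightarrow> real^'n"
  assumes ll: "local_lipschitz (UNIV::real set) UNIV (\<lambda>_. f)" and fl: "is_flow f phi"
    and ce: "continuous_on UNIV eta" and s: "0 \<le> s" and t: "0 \<le> t"
  shows "Tsg phi eta t (Tsg phi eta s h) = Tsg phi eta (t + s) h"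
proof
  fix x
  have "Tsg phi eta t (Tsg phi eta s h) x = exp (- vt phi eta t x) * exp (- vt phi eta s (phi t x)) * h (phi s (phi t x))"
    unfolding Tsg_def by simp
  also have "\<dots> = exp (- (vt phi eta t x + vt phi eta s (phi t x))) * h (phi (s + t) x)"
    using flow_prop[OF ll fl t s] by (simp add: exp_add[symmetric])
  also have "\<dots> = Tsg phi eta (t + s) h x"
    unfolding Tsg_def using vt_add[OF ll fl ce s t, of x] by (simp add: add.commute)
  finally show "Tsg phi eta t (Tsg phi eta s h) x = Tsg phi eta (t + s) h x" .
qed



lemma mvt_phi:
  fixes f :: "real^'n \<Rightarrow> real^'n"
  assumes fl: "is_flow f phi" and s: "0 \<le> s" and inK: "\<And>u. u \<in> {0..s} \<Longrightarrow> phi u x \<in> K1"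
    and B: "\<And>p. p \<in> K1 \<Longrightarrow> norm (f p) \<le> B"
  shows "norm (phi s x - x) \<le> B * s"
proof -
  have "norm ((phi s x - x) - (phi 0 x - x)) \<le> B * (s - 0)"
  proof (rule mvt_bound[where g = "\<lambda>u. phi u x - x" and g' = "\<lambda>u. f (phi u x)"])
    fix u assume u: "u \<in> {0..s}"
    have "((\<lambda>u. phi u x) has_vector_derivative f (phi u x)) (at u within {0..s})"
      using sol_phi[OF fl order_refl, of x s] u unfolding sol_def by auto
    then show "((\<lambda>u. phi u x - x) has_vector_derivative f (phi u x)) (at u within {0..s})"
      using has_vector_derivative_diff[OF _ has_vector_derivative_const[of x]] by fastforce
    show "norm (f (phi u x)) \<le> B" using B inK u by auto
  qed (use s in auto)
  moreover have "phi 0 x = x" using fl unfolding is_flow_def by auto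
  ultimately show ?thesis by simp
qed

lemma small_time:
  fixes f :: "real^'n \<Rightarrow> real^'n"
  assumes ll: "local_lipschitz (UNIV::real set) UNIV (\<lambda>_. f)" and fl: "is_flow f phi" and cK: "compact K"
  shows "\<exists>B b K1. 0 < b \<and> 0 \<le> B \<and> compact K1 \<and> K \<subseteq> K1 \<and>
     (\<forall>x\<in>K. \<forall>\<tau>\<in>{0..b}. norm (phi \<tau> x - x) \<le> B * \<tau> \<and> phi \<tau> x \<in> K1)"
proof -
  obtain K1 where cK1: "compact K1" and nb: "\<And>q. q \<in> K \<Longrightarrow> cball q 1 \<subseteq> K1"
    using nbhd_compact[OF cK, of 1] by auto
  have KK1: "K \<subseteq> K1" using nb by fastforce
  have fc: "continuous_on UNIV f" using local_lipschitz_continuous_on[OF ll, of 0] by simp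
  have "bounded (f ` K1)" by (rule compact_imp_bounded[OF compact_continuous_image[OF continuous_on_subset[OF fc] cK1]]) auto
  then obtain B0 where B0: "\<And>p. p \<in> K1 \<Longrightarrow> norm (f p) \<le> B0" unfolding bounded_iff by auto
  define B where "B = \<bar>B0\<bar>"
  have B: "\<And>p. p \<in> K1 \<Longrightarrow> norm (f p) \<le> B" using B0 unfolding B_def by force
  have B0': "0 \<le> B" unfolding B_def by simp
  define b where "b = 1 / (2 * (B + 1))"
  have bpos: "0 < b" unfolding b_def using B0' by simp
  have Bb: "B * b < 1" unfolding b_def using B0' by (simp add: field_simps)
  have main: "norm (phi \<tau> x - x) \<le> B * \<tau> \<and> phi \<tau> x \<in> K1" if x: "x \<in> K" and tau: "\<tau> \<in> {0..b}" for x \<tau>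
  proof -
    have inK1: "phi u x \<in> K1" if "norm (phi u x - x) \<le> 1" for u
      using nb[OF x] that by (auto simp: dist_norm norm_minus_commute)
    have c: "continuous_on {0..b} (\<lambda>u. norm (phi u x - x))"
      using sol_cont[OF sol_phi[OF fl order_refl, of x b]] by (intro continuous_intros)
    have all: "\<forall>s\<in>{0..b}. norm (phi s x - x) < 1"
    proof (rule exit_lemma[OF c])
      show "0 \<le> b" using bpos by simp
      have "phi 0 x = x" using fl unfolding is_flow_def by auto
      then show "norm (phi 0 x - x) < 1" by simp
    next
      fix s assume s: "s \<in> {0..b}" and le: "\<forall>u\<in>{0..s}. norm (phi u x - x) \<le> 1"
      have "norm (phi s x - x) \<le> B * s"
        by (rule mvt_phi[OF fl _ _ B]) (use s le inK1 in auto)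
      also have "\<dots> \<le> B * b" using s B0' by (intro mult_left_mono) auto
      finally show "norm (phi s x - x) < 1" using Bb by simp
    qed
    have "norm (phi \<tau> x - x) \<le> B * \<tau>"
      by (rule mvt_phi[OF fl _ _ B]) (use tau all inK1 in \<open>auto simp: less_imp_le\<close>)
    moreover have "phi \<tau> x \<in> K1" using all tau inK1 by (auto simp: less_imp_le)
    ultimately show ?thesis by simp
  qed
  show ?thesis using bpos B0' cK1 KK1 main by blast
qed



lemma strong_cont:
  fixes f :: "real^'n \<Rightarrow> real^'n" and h :: "(real^'n) \<Rightarrow>\<^sub>C real"
  assumes ll: "local_lipschitz (UNIV::real set) UNIV (\<lambda>_. f)" and fl: "is_flow f phi"
    and ce: "continuous_on UNIV eta" and pd: "pos_def eta xeq" and cK: "compact K"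
  shows "uniform_limit K (\<lambda>t. apply_bcontfun (Tb phi eta t h)) (apply_bcontfun h) (at_right 0)"
  unfolding uniform_limit_iff
proof (intro allI impI)
  fix e :: real assume e: "0 < e"
  obtain B b K1 where bpos: "0 < b" and B0: "0 \<le> B" and cK1: "compact K1" and KK1: "K \<subseteq> K1"
    and ST: "\<And>x \<tau>. x \<in> K \<Longrightarrow> \<tau> \<in> {0..b} \<Longrightarrow> norm (phi \<tau> x - x) \<le> B * \<tau> \<and> phi \<tau> x \<in> K1"
    using small_time[OF ll fl cK] by blast
  have "bounded (eta ` K1)"
    by (rule compact_imp_bounded[OF compact_continuous_image[OF continuous_on_subset[OF ce] cK1]]) auto
  then obtain E0 where E0: "\<And>p. p \<in> K1 \<Longrightarrow> norm (eta p) \<le> E0" unfolding bounded_iff by auto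
  define E where "E = \<bar>E0\<bar>"
  have E: "\<And>p. p \<in> K1 \<Longrightarrow> eta p \<le> E" using E0 unfolding E_def by force
  have E0': "0 \<le> E" unfolding E_def by simp
  define Hb where "Hb = norm h"
  have Hb: "\<And>x. \<bar>h x\<bar> \<le> Hb" unfolding Hb_def using norm_bounded[of h] by simp
  have Hb0: "0 \<le> Hb" unfolding Hb_def by simp
  have uc: "uniformly_continuous_on K1 (apply_bcontfun h)"
    by (rule compact_uniformly_continuous[OF continuous_on_apply_bcontfun cK1])
  obtain \<rho> where rho: "0 < \<rho>" and R: "\<And>p q. p \<in> K1 \<Longrightarrow> q \<in> K1 \<Longrightarrow> dist p q < \<rho> \<Longrightarrow> dist (h p) (h q) < e / 2"
    using uc e unfolding uniformly_continuous_on_def by (metis half_gt_zero)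
  define X where "X = E * Hb"
  have X0: "0 \<le> X" unfolding X_def using E0' Hb0 by simp
  define b' where "b' = min b (min (\<rho> / (B + 1)) (e / (2 * (X + 1))))"
  have b'pos: "0 < b'" unfolding b'_def using bpos rho e B0 X0 by simp
  show "\<forall>\<^sub>F t in at_right 0. \<forall>x\<in>K. dist (apply_bcontfun (Tb phi eta t h) x) (apply_bcontfun h x) < e"
    unfolding eventually_at_right_field
  proof (intro exI[of _ b'] conjI allI impI ballI)
    show "0 < b'" by (rule b'pos)
    fix \<tau> x assume tau0: "0 < \<tau>" and taub: "\<tau> < b'" and x: "x \<in> K"
    have tb: "\<tau> \<in> {0..b}" using tau0 taub unfolding b'_def by auto
    have app: "apply_bcontfun (Tb phi eta \<tau> h) x = exp (- vt phi eta \<tau> x) * h (phi \<tau> x)"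
      using Tb_apply[OF ll fl _ ce pd, of \<tau> h] tau0 unfolding Tsg_def by simp
    define v where "v = vt phi eta \<tau> x"
    have v0: "0 \<le> v" unfolding v_def by (rule vt_nonneg[OF fl ce pd])
    have vle: "v \<le> E * \<tau>"
    proof -
      have "v \<le> integral {0..\<tau>} (\<lambda>r. E)" unfolding v_def vt_def
      proof (rule integral_le[OF integrable_continuous_interval[OF eta_traj_cont[OF fl ce order_refl]]])
        show "(\<lambda>r. E) integrable_on {0..\<tau>}" by (rule integrable_continuous_interval) (rule continuous_on_const)
        fix r assume r: "r \<in> {0..\<tau>}"
        then have "r \<in> {0..b}" using tb by auto
        then show "eta (phi r x) \<le> E" using E ST[OF x] by blast
      qed
      then show ?thesis using tau0 by (simp add: mult.commute)
    qed
    have e1: "1 - v \<le> exp (- v)" using exp_ge_add_one_self[of "- v"] by simp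
    have e2: "exp (- v) \<le> 1" using v0 by simp
    have part1: "\<bar>(exp (- v) - 1) * h (phi \<tau> x)\<bar> \<le> v * Hb"
    proof -
      have "\<bar>(exp (- v) - 1) * h (phi \<tau> x)\<bar> = \<bar>exp (- v) - 1\<bar> * \<bar>h (phi \<tau> x)\<bar>" by (simp add: abs_mult)
      also have "\<dots> \<le> v * Hb" using e1 e2 Hb[of "phi \<tau> x"] v0 by (intro mult_mono) auto
      finally show ?thesis .
    qed
    have "v * Hb \<le> X * \<tau>" unfolding X_def using mult_right_mono[OF vle Hb0] by (simp add: algebra_simps)
    also have "\<dots> \<le> X * (e / (2 * (X + 1)))" using taub X0 unfolding b'_def by (intro mult_left_mono) auto
    also have "\<dots> < e / 2" using X0 e by (simp add: field_simps)
    finally have p1: "\<bar>(exp (- v) - 1) * h (phi \<tau> x)\<bar> < e / 2" using part1 by simp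
    have "norm (phi \<tau> x - x) \<le> B * \<tau>" and inK1: "phi \<tau> x \<in> K1" using ST[OF x tb] by auto
    moreover have "B * \<tau> \<le> B * (\<rho> / (B + 1))" using taub B0 unfolding b'_def by (intro mult_left_mono) auto
    moreover have "B * (\<rho> / (B + 1)) < \<rho>" using B0 rho by (simp add: field_simps)
    ultimately have "dist (phi \<tau> x) x < \<rho>" by (simp add: dist_norm)
    then have p2: "\<bar>h (phi \<tau> x) - h x\<bar> < e / 2" using R[OF inK1] KK1 x by (force simp: dist_real_def)
    have "exp (- v) * h (phi \<tau> x) - h x = (exp (- v) - 1) * h (phi \<tau> x) + (h (phi \<tau> x) - h x)"
      by (simp add: algebra_simps)
    then have "\<bar>exp (- v) * h (phi \<tau> x) - h x\<bar> < e" using p1 p2 by linarith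
    then show "dist (apply_bcontfun (Tb phi eta \<tau> h) x) (apply_bcontfun h x) < e"
      using app unfolding v_def by (simp add: dist_real_def)
  qed
qed



lemma Lim_shift:
  fixes g :: "real \<Rightarrow> 'a::t2_space"
  shows "Lim at_top (\<lambda>r. g (r + t)) = Lim at_top g"
proof -
  have "((\<lambda>r. g (r + t)) \<longlongrightarrow> l) at_top \<longleftrightarrow> (g \<longlongrightarrow> l) at_top" for l
  proof
    assume a: "((\<lambda>r. g (r + t)) \<longlongrightarrow> l) at_top"
    have f: "filterlim (\<lambda>r. - t + r) at_top at_top"
      by (rule filterlim_tendsto_add_at_top[OF tendsto_const filterlim_ident])
    show "(g \<longlongrightarrow> l) at_top" using filterlim_compose[OF a f] by simp
  next
    assume a: "(g \<longlongrightarrow> l) at_top"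
    have f: "filterlim (\<lambda>r. r + t) at_top at_top"
      using filterlim_tendsto_add_at_top[OF tendsto_const filterlim_ident, of t] by (simp add: add.commute)
    show "((\<lambda>r. g (r + t)) \<longlongrightarrow> l) at_top" using filterlim_compose[OF a f] by simp
  qed
  then show ?thesis unfolding t2_space_class.Lim_def by simp
qed

lemma Lim_flow:
  fixes f :: "real^'n \<Rightarrow> real^'n"
  assumes ll: "local_lipschitz (UNIV::real set) UNIV (\<lambda>_. f)" and fl: "is_flow f phi" and t: "0 \<le> t"
  shows "Lim at_top (\<lambda>r. phi r (phi t x)) = Lim at_top (\<lambda>r. phi r x)"
proof -
  have "Lim at_top (\<lambda>r. phi r (phi t x)) = Lim at_top (\<lambda>r. phi (r + t) x)"
  proof (rule Lim_cong)
    show "\<forall>\<^sub>F r in at_top. phi r (phi t x) = phi (r + t) x"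
      unfolding eventually_at_top_linorder by (intro exI[of _ 0]) (use flow_prop[OF ll fl t] in auto)
  qed simp
  also have "\<dots> = Lim at_top (\<lambda>r. phi r x)" by (rule Lim_shift)
  finally show ?thesis .
qed

definition G :: "(real \<Rightarrow> real^'n \<Rightarrow> real^'n) \<Rightarrow> (real^'n \<Rightarrow> real) \<Rightarrow> real^'n \<Rightarrow> real \<Rightarrow> real" where
  "G phi eta x r = eta (phi (max 0 r) x)"

lemma G_meas:
  assumes fl: "is_flow f phi" and ce: "continuous_on UNIV eta"
  shows "G phi eta x \<in> borel_measurable borel"
proof -
  have "continuous_on UNIV (\<lambda>r::real. phi (max 0 r) x)"
    by (rule continuous_on_compose2[OF phi_cont_time[OF fl], of UNIV "\<lambda>r. max 0 r"])
       (auto intro: continuous_intros)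
  then have "continuous_on UNIV (G phi eta x)"
    unfolding G_def[abs_def] using continuous_on_compose2[OF ce] by blast
  then show ?thesis by (rule borel_measurable_continuous_onI)
qed

lemma Vfun_G:
  "Vfun phi eta x = (\<integral>\<^sup>+ r. indicator {0..} r * ennreal (G phi eta x r) \<partial>lborel)"
  unfolding Vfun_def G_def
  by (rule nn_integral_cong) (auto split: split_indicator simp: max_def)



lemma W1:
  assumes fl: "is_flow f phi" and ce: "continuous_on UNIV eta" and pd: "pos_def eta xeq" and t: "0 \<le> t"
  shows "(\<integral>\<^sup>+ r. indicator {0..t} r * ennreal (G phi eta x r) \<partial>lborel) = ennreal (vt phi eta t x)"
proof -
  note [measurable] = G_meas[OF fl ce]
  have eq: "(\<lambda>r. indicator {0..t} r * ennreal (G phi eta x r)) = (\<lambda>r. ennreal (indicator {0..t} r * G phi eta x r))"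
    by (auto split: split_indicator)
  have int: "(G phi eta x has_integral vt phi eta t x) {0..t}"
  proof -
    have "G phi eta x integrable_on {0..t}"
      by (rule integrable_eq[OF integrable_continuous_interval[OF eta_traj_cont[OF fl ce order_refl]]])
        (auto simp: G_def max_def)
    moreover have "integral {0..t} (G phi eta x) = vt phi eta t x"
      unfolding vt_def by (rule integral_cong) (auto simp: G_def max_def)
    ultimately show ?thesis using integrable_integral by fastforce
  qed
  have intU: "((\<lambda>r. indicator {0..t} r * G phi eta x r) has_integral vt phi eta t x) UNIV"
  proof -
    have "(\<lambda>r. indicator {0..t} r * G phi eta x r) = (\<lambda>r. if r \<in> {0..t} then G phi eta x r else 0)"
      by (auto split: split_indicator)
    then show ?thesis using int has_integral_restrict_UNIV[of "{0..t}" "G phi eta x"] by simp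
  qed
  have "integral\<^sup>N lborel (\<lambda>r. indicator {0..t} r * G phi eta x r) = vt phi eta t x"
  proof (rule nn_integral_has_integral_lborel[OF _ _ intU])
    show "(\<lambda>r. indicator {0..t} r * G phi eta x r) \<in> borel_measurable borel" by measurable
  qed (use eta_nonneg[OF pd] in \<open>auto simp: G_def split: split_indicator\<close>)
  then show ?thesis using eq by simp
qed

lemma W2:
  fixes f :: "real^'n \<Rightarrow> real^'n"
  assumes ll: "local_lipschitz (UNIV::real set) UNIV (\<lambda>_. f)" and fl: "is_flow f phi"
    and ce: "continuous_on UNIV eta" and t: "0 \<le> t"
  shows "(\<integral>\<^sup>+ r. indicator {t<..} r * ennreal (G phi eta x r) \<partial>lborel) = Vfun phi eta (phi t x)"
proof -
  note [measurable] = G_meas[OF fl ce]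
  have "(\<integral>\<^sup>+ r. indicator {t<..} r * ennreal (G phi eta x r) \<partial>lborel)
      = (\<integral>\<^sup>+ r. indicator {t<..} r * ennreal (G phi eta x r) \<partial>(distr lborel borel ((+) t)))"
    by (simp add: lborel_distr_plus)
  also have "\<dots> = (\<integral>\<^sup>+ r. indicator {t<..} (t + r) * ennreal (G phi eta x (t + r)) \<partial>lborel)"
    by (rule nn_integral_distr) auto
  also have "\<dots> = (\<integral>\<^sup>+ r. indicator {0..} r * ennreal (G phi eta (phi t x) r) \<partial>lborel)"
  proof (rule nn_integral_cong_AE)
    show "AE r in lborel. indicator {t<..} (t + r) * ennreal (G phi eta x (t + r)) =
        indicator {0..} r * ennreal (G phi eta (phi t x) r)"
      using AE_lborel_singleton[of "0::real"]
    proof eventually_elim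
      case (elim r)
      show ?case
      proof (cases "0 < r")
        case True
        have "phi r (phi t x) = phi (r + t) x" using flow_prop[OF ll fl t, of r] True by simp
        then show ?thesis using True t by (simp add: G_def max_def add.commute)
      next
        case False
        then show ?thesis using elim by (simp add: indicator_def)
      qed
    qed
  qed
  also have "\<dots> = Vfun phi eta (phi t x)" by (simp add: Vfun_G)
  finally show ?thesis .
qed

lemma V_rel:
  fixes f :: "real^'n \<Rightarrow> real^'n"
  assumes ll: "local_lipschitz (UNIV::real set) UNIV (\<lambda>_. f)" and fl: "is_flow f phi"
    and ce: "continuous_on UNIV eta" and pd: "pos_def eta xeq" and t: "0 \<le> t"
  shows "Vfun phi eta x = ennreal (vt phi eta t x) + Vfun phi eta (phi t x)"
proof -
  note [measurable] = G_meas[OF fl ce]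
  have "Vfun phi eta x = (\<integral>\<^sup>+ r. indicator {0..t} r * ennreal (G phi eta x r) + indicator {t<..} r * ennreal (G phi eta x r) \<partial>lborel)"
    unfolding Vfun_G using t by (intro nn_integral_cong) (auto split: split_indicator)
  also have "\<dots> = (\<integral>\<^sup>+ r. indicator {0..t} r * ennreal (G phi eta x r) \<partial>lborel) + (\<integral>\<^sup>+ r. indicator {t<..} r * ennreal (G phi eta x r) \<partial>lborel)"
    by (rule nn_integral_add) auto
  also have "\<dots> = ennreal (vt phi eta t x) + Vfun phi eta (phi t x)"
    using W1[OF fl ce pd t] W2[OF ll fl ce t] by simp
  finally show ?thesis .
qed



lemma invariance:
  fixes f :: "real^'n \<Rightarrow> real^'n"
  assumes ll: "local_lipschitz (UNIV::real set) UNIV (\<lambda>_. f)" and fl: "is_flow f phi"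
    and ce: "continuous_on UNIV eta" and pd: "pos_def eta xeq" and t: "0 \<le> t"
  shows "Tsg phi eta t (Ufun phi eta h) x = Ufun phi eta h x"
proof -
  define v where "v = vt phi eta t x"
  have v0: "0 \<le> v" unfolding v_def by (rule vt_nonneg[OF fl ce pd])
  have rel: "Vfun phi eta x = ennreal v + Vfun phi eta (phi t x)"
    unfolding v_def by (rule V_rel[OF ll fl ce pd t])
  have L: "Lim at_top (\<lambda>r. phi r (phi t x)) = Lim at_top (\<lambda>r. phi r x)" by (rule Lim_flow[OF ll fl t])
  show ?thesis
  proof (cases "Vfun phi eta (phi t x) < \<infinity>")
    case True
    have fin: "Vfun phi eta x < \<infinity>" using True rel by (simp add: ennreal_add_less_top)
    have e: "enn2real (Vfun phi eta x) = v + enn2real (Vfun phi eta (phi t x))"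
      using rel True v0 by (simp add: enn2real_plus)
    show ?thesis
      unfolding Tsg_def Ufun_def using True fin L
      by (simp add: e v_def[symmetric] exp_add[symmetric] exp_minus exp_diff field_simps)
  next
    case False
    then have "Vfun phi eta (phi t x) = \<infinity>" by (simp add: less_top[symmetric])
    then have "Vfun phi eta x = \<infinity>" using rel by simp
    then show ?thesis unfolding Tsg_def Ufun_def using False by simp
  qed
qed



theorem proposition1:
  fixes f :: "real^'n \<Rightarrow> real^'n" and phi :: "real \<Rightarrow> real^'n \<Rightarrow> real^'n"
    and eta :: "real^'n \<Rightarrow> real" and xeq :: "real^'n"
  assumes "local_lipschitz (UNIV::real set) UNIV (\<lambda>_. f)"
    and "is_flow f phi"
    and "f xeq = 0"
    and "asymp_stable phi xeq"
    and "loc_exp_stable phi xeq"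
    and "continuous_on UNIV eta"
    and "pos_def eta xeq"
  shows "(\<forall>t\<ge>0. \<forall>h \<in> bcontfun. Tsg phi eta t h \<in> bcontfun)
    \<and> (\<forall>t\<ge>0. bounded_linear (Tb phi eta t))
    \<and> Tb phi eta 0 = id
    \<and> (\<forall>t\<ge>0. \<forall>s\<ge>0. Tb phi eta t \<circ> Tb phi eta s = Tb phi eta (t + s))
    \<and> (\<forall>h::(real^'n) \<Rightarrow>\<^sub>C real. \<forall>K. compact K \<longrightarrow>
         uniform_limit K (\<lambda>t. apply_bcontfun (Tb phi eta t h)) (apply_bcontfun h) (at_right 0))
    \<and> (\<forall>t\<ge>0. \<forall>h \<in> bcontfun. \<forall>x. Tsg phi eta t (Ufun phi eta h) x = Ufun phi eta h x)"
proof -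
  note ll = assms(1) and fl = assms(2) and ce = assms(6) and pd = assms(7)
  have P1: "\<forall>t\<ge>0. \<forall>h \<in> bcontfun. Tsg phi eta t h \<in> bcontfun"
    using Tsg_bcontfun[OF ll fl _ ce pd] by blast
  have P2: "bounded_linear (Tb phi eta t)" if t: "0 \<le> t" for t
  proof (rule bounded_linear_intro[where K = 1])
    note ap = Tb_apply[OF ll fl t ce pd]
    fix x y :: "(real^'n) \<Rightarrow>\<^sub>C real" and r :: real
    show "Tb phi eta t (x + y) = Tb phi eta t x + Tb phi eta t y"
      by (rule bcontfun_eqI) (simp add: ap Tsg_def algebra_simps)
    show "Tb phi eta t (r *\<^sub>R x) = r *\<^sub>R Tb phi eta t x"
      by (rule bcontfun_eqI) (simp add: ap Tsg_def algebra_simps)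
    show "norm (Tb phi eta t x) \<le> norm x * 1"
    proof -
      have "norm (apply_bcontfun (Tb phi eta t x) z) \<le> norm x" for z
      proof -
        have "exp (- vt phi eta t z) \<le> 1" using vt_nonneg[OF fl ce pd] by simp
        then have "\<bar>exp (- vt phi eta t z) * x (phi t z)\<bar> \<le> 1 * \<bar>x (phi t z)\<bar>"
          using mult_right_mono[of "exp (- vt phi eta t z)" 1 "\<bar>x (phi t z)\<bar>"] by (simp add: abs_mult)
        also have "\<dots> \<le> norm x" using norm_bounded[of x "phi t z"] by simp
        finally show ?thesis by (simp add: ap Tsg_def)
      qed
      then show ?thesis using norm_bound[of "Tb phi eta t x" "norm x"] by simp
    qed
  qed
  have P3: "Tb phi eta 0 = id"
  proof
    fix h :: "(real^'n) \<Rightarrow>\<^sub>C real"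
    show "Tb phi eta 0 h = id h"
      unfolding Tb_def Tsg_zero[OF fl] by (simp add: apply_bcontfun_inverse)
  qed
  have P4: "Tb phi eta t \<circ> Tb phi eta s = Tb phi eta (t + s)" if t: "0 \<le> t" and s: "0 \<le> s" for t s
  proof
    fix h :: "(real^'n) \<Rightarrow>\<^sub>C real"
    have ts: "0 \<le> t + s" using t s by simp
    show "(Tb phi eta t \<circ> Tb phi eta s) h = Tb phi eta (t + s) h"
      by (rule bcontfun_eqI)
        (simp add: Tb_apply[OF ll fl t ce pd] Tb_apply[OF ll fl s ce pd] Tb_apply[OF ll fl ts ce pd]
           Tsg_comp[OF ll fl ce s t])
  qed
  have P5: "\<forall>h::(real^'n) \<Rightarrow>\<^sub>C real. \<forall>K. compact K \<longrightarrow>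
         uniform_limit K (\<lambda>t. apply_bcontfun (Tb phi eta t h)) (apply_bcontfun h) (at_right 0)"
    using strong_cont[OF ll fl ce pd] by blast
  have P6: "\<forall>t\<ge>0. \<forall>h \<in> bcontfun. \<forall>x. Tsg phi eta t (Ufun phi eta h) x = Ufun phi eta h x"
    using invariance[OF ll fl ce pd] by blast
  show ?thesis using P1 P2 P3 P4 P5 P6 by blast
qed

end
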